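(* Let $H_1$ and $H_2$ be vertex-disjoint connected graphs, each with at least two vertices, and let $l\geqslant 2$. Let $G_1$ be the graph obtained from $H_1$, $H_2$ and a path $v_1v_2\ldots v_l$ by identifying $v_1$ with a vertex of $H_1$ and $v_l$ with a vertex of $H_2$ (the internal vertices $v_2,\ldots,v_{l-1}$ being new). Let $$G_2=G_1-\{v_lx: x\in N_{H_2}(v_l)\}+\{v_1x: x\in N_{H_2}(v_l)\}.$$ Then $\xi^{ee}(G_1)<\xi^{ee}(G_2)$.
   Context: All graphs are finite, simple and connected. For a vertex $x$ of a connected graph $G$, $\varepsilon_G(x)$ is the eccentricity of $x$ and $d_G(x)$ its degree; $N_H(v)$ is the neighbourhood of $v$ in $H$. The total reciprocal edge-eccentricity of $G$ is $\xi^{ee}(G)=\sum_{uv\in E(G)}\left(\frac{1}{\varepsilon_G(u)}+\frac{1}{\varepsilon_G(v)}\right)=\sum_{x\in V(G)}\frac{d_G(x)}{\varepsilon_G(x)}$. *)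

theory Defs
  imports Main "HOL-Library.Multiset" Complex_Main
begin

definition simple_graph :: "'a set \<Rightarrow> 'a set set \<Rightarrow> bool" where
  "simple_graph V E \<longleftrightarrow> finite V \<and>
     (\<forall>e\<in>E. \<exists>x y. x \<noteq> y \<and> x \<in> V \<and> y \<in> V \<and> e = {x, y})"

definition is_walk :: "'a set set \<Rightarrow> 'a list \<Rightarrow> bool" where
  "is_walk E xs \<longleftrightarrow> xs \<noteq> [] \<and> (\<forall>i. Suc i < length xs \<longrightarrow> {xs ! i, xs ! Suc i} \<in> E)"

definition connected_graph :: "'a set \<Rightarrow> 'a set set \<Rightarrow> bool" where
  "connected_graph V E \<longleftrightarrow> V \<noteq> {} \<and>
     (\<forall>u\<in>V. \<forall>w\<in>V. \<exists>xs. is_walk E xs \<and> hd xs = u \<and> last xs = w)"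

definition gdist :: "'a set set \<Rightarrow> 'a \<Rightarrow> 'a \<Rightarrow> nat" where
  "gdist E u w = (LEAST n. \<exists>xs. is_walk E xs \<and> hd xs = u \<and> last xs = w \<and> length xs = Suc n)"

definition ecc :: "'a set \<Rightarrow> 'a set set \<Rightarrow> 'a \<Rightarrow> nat" where
  "ecc V E x = Max (gdist E x ` V)"

definition nbrs :: "'a set set \<Rightarrow> 'a \<Rightarrow> 'a set" where
  "nbrs E x = {y. {x, y} \<in> E}"

definition degree :: "'a set set \<Rightarrow> 'a \<Rightarrow> nat" where
  "degree E x = card (nbrs E x)"

definition xi_ee :: "'a set \<Rightarrow> 'a set set \<Rightarrow> real" where
  "xi_ee V E = (\<Sum>x\<in>V. real (degree E x) / real (ecc V E x))"

end

theory Submission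
  imports Defs
begin



lemma is_walk_single[simp]: "is_walk E [x]"
  by (simp add: is_walk_def)

lemma is_walk_Cons2[simp]: "is_walk E (x # y # zs) \<longleftrightarrow> {x,y} \<in> E \<and> is_walk E (y # zs)"
proof
  assume h: "is_walk E (x # y # zs)"
  hence "{x,y} \<in> E" unfolding is_walk_def by force
  moreover have "is_walk E (y # zs)" unfolding is_walk_def
  proof (intro conjI allI impI)
    fix i assume "Suc i < length (y # zs)"
    with h show "{(y # zs) ! i, (y # zs) ! Suc i} \<in> E" unfolding is_walk_def
      by (metis Suc_less_eq length_Cons nth_Cons_Suc)
  qed simp
  ultimately show "{x,y} \<in> E \<and> is_walk E (y # zs)" by blast
next
  assume h: "{x,y} \<in> E \<and> is_walk E (y # zs)"
  show "is_walk E (x # y # zs)" unfolding is_walk_def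
  proof (intro conjI allI impI)
    fix i assume i: "Suc i < length (x # y # zs)"
    show "{(x # y # zs) ! i, (x # y # zs) ! Suc i} \<in> E"
    proof (cases i)
      case 0 then show ?thesis using h by simp
    next
      case (Suc j) then show ?thesis using h i unfolding is_walk_def
        by (metis Suc_less_eq length_Cons nth_Cons_Suc)
    qed
  qed simp
qed

lemma is_walk_nonempty: "is_walk E xs \<Longrightarrow> xs \<noteq> []"
  by (simp add: is_walk_def)

lemma is_walk_mono: "is_walk E xs \<Longrightarrow> E \<subseteq> F \<Longrightarrow> is_walk F xs"
  unfolding is_walk_def by blast

lemma is_walk_append:
  "is_walk E xs \<Longrightarrow> is_walk E ys \<Longrightarrow> last xs = hd ys \<Longrightarrow> is_walk E (xs @ tl ys)"
proof (induction xs)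
  case Nil then show ?case by (simp add: is_walk_def)
next
  case (Cons x xs)
  show ?case
  proof (cases xs)
    case Nil
    then show ?thesis using Cons.prems
      by (metis append_Cons append_Nil is_walk_nonempty last_ConsL list.collapse)
  next
    case (Cons y zs)
    then show ?thesis using Cons.prems Cons.IH by auto
  qed
qed

lemma is_walk_rev: "is_walk E xs \<Longrightarrow> is_walk E (rev xs)"
proof (induction xs)
  case Nil then show ?case by (simp add: is_walk_def)
next
  case (Cons x xs)
  show ?case
  proof (cases xs)
    case Nil then show ?thesis by simp
  next
    case (Cons y zs)
    have w: "is_walk E (rev xs)" using Cons.IH Cons.prems Cons by auto
    have "{x,y} \<in> E" using Cons.prems Cons by simp
    then have e: "is_walk E [y,x]" by (simp add: insert_commute)
    have "is_walk E (rev xs @ tl [y,x])"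
      by (rule is_walk_append[OF w e]) (simp add: Cons last_rev)
    then show ?thesis by simp
  qed
qed

lemma last_append_tl: "xs \<noteq> [] \<Longrightarrow> ys \<noteq> [] \<Longrightarrow> last xs = hd ys \<Longrightarrow> last (xs @ tl ys) = last ys"
  by (cases ys) auto

lemma hd_append_tl: "xs \<noteq> [] \<Longrightarrow> hd (xs @ tl ys) = hd xs"
  by (cases xs) auto

definition reach :: "'a set set \<Rightarrow> 'a \<Rightarrow> 'a \<Rightarrow> bool" where
  "reach E u w \<longleftrightarrow> (\<exists>xs. is_walk E xs \<and> hd xs = u \<and> last xs = w)"

lemma reach_refl[simp]: "reach E u u"
  unfolding reach_def by (rule exI[of _ "[u]"]) simp

lemma reach_edge: "{u,w} \<in> E \<Longrightarrow> reach E u w"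
  unfolding reach_def by (rule exI[of _ "[u,w]"]) simp

lemma reach_trans: "reach E u m \<Longrightarrow> reach E m w \<Longrightarrow> reach E u w"
  unfolding reach_def
proof (elim exE conjE)
  fix xs ys assume h: "is_walk E xs" "hd xs = u" "last xs = m" "is_walk E ys" "hd ys = m" "last ys = w"
  show "\<exists>zs. is_walk E zs \<and> hd zs = u \<and> last zs = w"
  proof (rule exI[of _ "xs @ tl ys"], intro conjI)
    show "is_walk E (xs @ tl ys)" using h by (intro is_walk_append) auto
    show "hd (xs @ tl ys) = u" using h is_walk_nonempty hd_append_tl by metis
    show "last (xs @ tl ys) = w" using h is_walk_nonempty last_append_tl by metis
  qed
qed

lemma reach_sym: "reach E u w \<Longrightarrow> reach E w u"
  unfolding reach_def
  by (metis hd_rev is_walk_nonempty is_walk_rev last_rev)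

lemma reach_mono: "reach E u w \<Longrightarrow> E \<subseteq> F \<Longrightarrow> reach F u w"
  unfolding reach_def using is_walk_mono by blast

lemma connected_reach: "connected_graph V E \<Longrightarrow> u \<in> V \<Longrightarrow> w \<in> V \<Longrightarrow> reach E u w"
  unfolding connected_graph_def reach_def by blast

lemma gdist_le_walk:
  assumes "is_walk E xs" "hd xs = u" "last xs = w"
  shows "gdist E u w \<le> length xs - 1"
proof -
  have "length xs = Suc (length xs - 1)" using is_walk_nonempty[OF assms(1)] by (cases xs) auto
  then show ?thesis unfolding gdist_def using assms by (intro Least_le) metis
qed

lemma gdist_shortest:
  assumes "reach E u w"
  shows "\<exists>xs. is_walk E xs \<and> hd xs = u \<and> last xs = w \<and> length xs = Suc (gdist E u w)"
proof -
  from assms obtain xs where h: "is_walk E xs" "hd xs = u" "last xs = w" unfolding reach_def by blast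
  have "length xs = Suc (length xs - 1)" using is_walk_nonempty[OF h(1)] by (cases xs) auto
  then have "\<exists>n xs. is_walk E xs \<and> hd xs = u \<and> last xs = w \<and> length xs = Suc n" using h by metis
  then show ?thesis unfolding gdist_def by (rule LeastI_ex)
qed

lemma gdist_refl[simp]: "gdist E u u = 0"
  using gdist_le_walk[of E "[u]" u u] by simp

lemma gdist_edge: "{u,w} \<in> E \<Longrightarrow> gdist E u w \<le> 1"
  using gdist_le_walk[of E "[u,w]" u w] by simp

lemma gdist_tri:
  assumes "reach E u m" "reach E m w"
  shows "gdist E u w \<le> gdist E u m + gdist E m w"
proof -
  obtain xs where xs: "is_walk E xs" "hd xs = u" "last xs = m" "length xs = Suc (gdist E u m)"
    using gdist_shortest[OF assms(1)] by blast
  obtain ys where ys: "is_walk E ys" "hd ys = m" "last ys = w" "length ys = Suc (gdist E m w)"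
    using gdist_shortest[OF assms(2)] by blast
  have "is_walk E (xs @ tl ys)" using xs ys by (intro is_walk_append) auto
  moreover have "hd (xs @ tl ys) = u" using xs is_walk_nonempty hd_append_tl by metis
  moreover have "last (xs @ tl ys) = w" using xs ys is_walk_nonempty last_append_tl by metis
  ultimately have "gdist E u w \<le> length (xs @ tl ys) - 1" by (rule gdist_le_walk)
  also have "\<dots> = gdist E u m + gdist E m w" using xs ys by simp
  finally show ?thesis .
qed

lemma gdist_sym_le:
  assumes "reach E u w" shows "gdist E w u \<le> gdist E u w"
proof -
  obtain xs where xs: "is_walk E xs" "hd xs = u" "last xs = w" "length xs = Suc (gdist E u w)"
    using gdist_shortest[OF assms] by blast
  have "gdist E w u \<le> length (rev xs) - 1"
    using xs is_walk_nonempty[OF xs(1)] by (intro gdist_le_walk is_walk_rev) (auto simp: hd_rev last_rev)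
  then show ?thesis using xs by simp
qed

lemma gdist_sym: "reach E u w \<Longrightarrow> gdist E u w = gdist E w u"
  using gdist_sym_le reach_sym by (metis le_antisym)

lemma gdist_zero: "reach E u w \<Longrightarrow> gdist E u w = 0 \<Longrightarrow> u = w"
  using gdist_shortest
  by (metis One_nat_def hd_conv_nth is_walk_nonempty last_conv_nth diff_Suc_1 zero_less_Suc)

lemma walk_map:
  fixes d :: "'b \<Rightarrow> 'b \<Rightarrow> nat"
  assumes tri: "\<And>x y z. x\<in>S \<Longrightarrow> y\<in>S \<Longrightarrow> z\<in>S \<Longrightarrow> d x z \<le> d x y + d y z"
    and rf: "\<And>x. x\<in>S \<Longrightarrow> d x x = 0" and gS: "\<And>x. g x \<in> S"
    and edge: "\<And>u w. {u,w}\<in>E \<Longrightarrow> d (g u) (g w) \<le> c"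
  shows "is_walk E xs \<Longrightarrow> d (g (hd xs)) (g (last xs)) \<le> c * (length xs - 1)"
proof (induction xs)
  case Nil then show ?case by (simp add: is_walk_def)
next
  case (Cons x xs)
  show ?case
  proof (cases xs)
    case Nil then show ?thesis using rf gS by simp
  next
    case (Cons y zs)
    have IH: "d (g y) (g (last xs)) \<le> c * (length xs - 1)" using Cons.IH Cons.prems Cons by auto
    have e: "d (g x) (g y) \<le> c" using Cons.prems Cons edge by auto
    have "d (g x) (g (last xs)) \<le> d (g x) (g y) + d (g y) (g (last xs))" using tri gS by blast
    also have "\<dots> \<le> c + c * (length xs - 1)" using IH e by linarith
    also have "\<dots> = c * (length (x # xs) - 1)" using Cons by simp
    finally show ?thesis using Cons by simp
  qed
qed

lemma dist_map:
  fixes d :: "'b \<Rightarrow> 'b \<Rightarrow> nat"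
  assumes tri: "\<And>x y z. x\<in>S \<Longrightarrow> y\<in>S \<Longrightarrow> z\<in>S \<Longrightarrow> d x z \<le> d x y + d y z"
    and rf: "\<And>x. x\<in>S \<Longrightarrow> d x x = 0" and gS: "\<And>x. g x \<in> S"
    and edge: "\<And>u w. {u,w}\<in>E \<Longrightarrow> d (g u) (g w) \<le> c"
    and r: "reach E u w"
  shows "d (g u) (g w) \<le> c * gdist E u w"
proof -
  obtain xs where xs: "is_walk E xs" "hd xs = u" "last xs = w" "length xs = Suc (gdist E u w)"
    using gdist_shortest[OF r] by blast
  have "d (g (hd xs)) (g (last xs)) \<le> c * (length xs - 1)"
    by (rule walk_map[of S d g E c, OF tri rf gS edge xs(1)])
  then show ?thesis using xs by auto
qed

lemma lip:
  fixes f :: "'a \<Rightarrow> int"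
  assumes edge: "\<And>u w. {u,w}\<in>E \<Longrightarrow> \<bar>f u - f w\<bar> \<le> 1" and r: "reach E u w"
  shows "\<bar>f u - f w\<bar> \<le> int (gdist E u w)"
proof -
  let ?d = "\<lambda>m n::int. nat \<bar>m - n\<bar>"
  have t: "\<And>x y z. x\<in>UNIV \<Longrightarrow> y\<in>UNIV \<Longrightarrow> z\<in>UNIV \<Longrightarrow> ?d x z \<le> ?d x y + ?d y z" by linarith
  have rf: "\<And>x. x\<in>UNIV \<Longrightarrow> ?d x x = 0" by simp
  have gs: "\<And>x. f x \<in> UNIV" by simp
  have e: "\<And>u w. {u,w}\<in>E \<Longrightarrow> ?d (f u) (f w) \<le> 1"
  proof -
    fix u w assume "{u,w}\<in>E" then have "\<bar>f u - f w\<bar> \<le> 1" by (rule edge)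
    then show "?d (f u) (f w) \<le> 1" by (simp add: nat_le_iff)
  qed
  have "?d (f u) (f w) \<le> 1 * gdist E u w"
    by (rule dist_map[of UNIV ?d f E 1, OF t rf gs e r])
  then show ?thesis by (simp add: nat_le_iff)
qed

lemma reach_map:
  assumes edge: "\<And>u w. {u,w}\<in>E \<Longrightarrow> reach F (g u) (g w)" and r: "reach E u w"
  shows "reach F (g u) (g w)"
proof -
  let ?d = "\<lambda>x y. if reach F x y then 0::nat else 1"
  have t: "\<And>x y z. x\<in>UNIV \<Longrightarrow> y\<in>UNIV \<Longrightarrow> z\<in>UNIV \<Longrightarrow> ?d x z \<le> ?d x y + ?d y z"
    using reach_trans by fastforce
  have rf: "\<And>x. x\<in>UNIV \<Longrightarrow> ?d x x = 0" by simp
  have gs: "\<And>x. g x \<in> UNIV" by simp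
  have e: "\<And>u w. {u,w}\<in>E \<Longrightarrow> ?d (g u) (g w) \<le> 0" using edge by simp
  have "?d (g u) (g w) \<le> 0 * gdist E u w"
    by (rule dist_map[of UNIV ?d g E 0, OF t rf gs e r])
  then show ?thesis by (auto split: if_splits)
qed

lemma ecc_ge: "finite V \<Longrightarrow> z \<in> V \<Longrightarrow> gdist E x z \<le> ecc V E x"
  unfolding ecc_def by simp

lemma ecc_attained: "finite V \<Longrightarrow> V \<noteq> {} \<Longrightarrow> \<exists>z\<in>V. ecc V E x = gdist E x z"
  unfolding ecc_def by (metis Max_in finite_imageI image_iff image_is_empty)




lemma simple_edge: "simple_graph V E \<Longrightarrow> {u,w} \<in> E \<Longrightarrow> u \<in> V \<and> w \<in> V \<and> u \<noteq> w"
proof -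
  assume s: "simple_graph V E" "{u,w} \<in> E"
  then obtain x y where xy: "x \<noteq> y" "x \<in> V" "y \<in> V" "{u,w} = {x,y}"
    unfolding simple_graph_def by blast
  then have "(u = x \<and> w = y) \<or> (u = y \<and> w = x)" by (simp add: doubleton_eq_iff)
  then show ?thesis using xy by blast
qed

lemma connected_nbr: "connected_graph V E \<Longrightarrow> x \<in> V \<Longrightarrow> z \<in> V \<Longrightarrow> z \<noteq> x \<Longrightarrow> \<exists>y. {x,y} \<in> E"
proof -
  assume c: "connected_graph V E" "x \<in> V" "z \<in> V" "z \<noteq> x"
  then obtain xs where xs: "is_walk E xs" "hd xs = x" "last xs = z" unfolding connected_graph_def by blast
  then obtain ys where ys: "xs = x # ys" using is_walk_nonempty by (cases xs) auto
  then have "ys \<noteq> []" using xs(3) c(4) by auto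
  then obtain y zs where "ys = y # zs" by (cases ys) auto
  then show ?thesis using xs(1) ys by auto
qed

lemma card2_other: "card V \<ge> 2 \<Longrightarrow> \<exists>z\<in>V. z \<noteq> x"
proof (rule ccontr)
  assume c: "card V \<ge> 2" "\<not> (\<exists>z\<in>V. z \<noteq> x)"
  then have "V \<subseteq> {x}" by blast
  then have "card V \<le> card {x}" using card_mono[of "{x}" V] by simp
  then show False using c(1) by simp
qed

lemma ecc_pos: "finite V \<Longrightarrow> x \<in> V \<Longrightarrow> z \<in> V \<Longrightarrow> z \<noteq> x \<Longrightarrow> reach E x z \<Longrightarrow> 0 < ecc V E x"
proof -
  assume h: "finite V" "x \<in> V" "z \<in> V" "z \<noteq> x" "reach E x z"
  have "gdist E x z \<noteq> 0" using gdist_zero h by metis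
  moreover have "gdist E x z \<le> ecc V E x" using ecc_ge h by metis
  ultimately show ?thesis by linarith
qed

locale setup3 =
  fixes V1 V2 :: "'a set" and E1 E2 :: "'a set set" and v :: "nat \<Rightarrow> 'a" and l :: nat
  assumes s1: "simple_graph V1 E1" and c1: "connected_graph V1 E1" and k1: "card V1 \<ge> 2"
    and s2: "simple_graph V2 E2" and c2: "connected_graph V2 E2" and k2: "card V2 \<ge> 2"
    and disj: "V1 \<inter> V2 = {}"
    and l2: "l \<ge> 2"
    and a1: "v 1 \<in> V1" and bl: "v l \<in> V2"
    and inj: "inj_on v {1..l}"
    and intr: "\<forall>i\<in>{2..<l}. v i \<notin> V1 \<union> V2"
begin

definition "VG = V1 \<union> V2 \<union> v ` {1..l}"
definition "EP = {{v i, v (Suc i)} | i. 1 \<le> i \<and> i < l}"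
definition "EG1 = E1 \<union> E2 \<union> EP"
definition "N = nbrs E2 (v l)"
definition "R = {{v l, x} | x. x \<in> N}"
definition "A = {{v 1, x} | x. x \<in> N}"
definition "EG2 = (EG1 - R) \<union> A"

lemma finV1: "finite V1" using s1 simple_graph_def by blast
lemma finV2: "finite V2" using s2 simple_graph_def by blast
lemma finVG: "finite VG" unfolding VG_def using finV1 finV2 by simp

lemma E1_mem: "{u,w} \<in> E1 \<Longrightarrow> u \<in> V1 \<and> w \<in> V1 \<and> u \<noteq> w" using simple_edge[OF s1] .
lemma E2_mem: "{u,w} \<in> E2 \<Longrightarrow> u \<in> V2 \<and> w \<in> V2 \<and> u \<noteq> w" using simple_edge[OF s2] .

lemma pv_eq: "i \<in> {1..l} \<Longrightarrow> j \<in> {1..l} \<Longrightarrow> v i = v j \<longleftrightarrow> i = j"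
  using inj by (meson inj_on_eq_iff)

lemma pv_V1: "i \<in> {1..l} \<Longrightarrow> v i \<in> V1 \<longleftrightarrow> i = 1"
proof -
  assume i: "i \<in> {1..l}"
  show ?thesis
  proof (cases "i = 1")
    case True then show ?thesis using a1 by simp
  next
    case False
    have "v i \<notin> V1"
    proof (cases "i = l")
      case True then show ?thesis using bl disj by auto
    next
      case False2: False
      then have "i \<in> {2..<l}" using i False by auto
      then show ?thesis using intr by auto
    qed
    then show ?thesis using False by simp
  qed
qed

lemma pv_V2: "i \<in> {1..l} \<Longrightarrow> v i \<in> V2 \<longleftrightarrow> i = l"
proof -
  assume i: "i \<in> {1..l}"
  show ?thesis
  proof (cases "i = l")
    case True then show ?thesis using bl by simp
  next
    case False
    have "v i \<notin> V2"
    proof (cases "i = 1")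
      case True then show ?thesis using a1 disj by auto
    next
      case False2: False
      then have "i \<in> {2..<l}" using i False by auto
      then show ?thesis using intr by auto
    qed
    then show ?thesis using False by simp
  qed
qed

lemma v1_ne_vl: "v 1 \<noteq> v l" using a1 bl disj by auto

lemma EP_iff: "{u,w} \<in> EP \<longleftrightarrow> (\<exists>i. 1 \<le> i \<and> i < l \<and> ((u = v i \<and> w = v (Suc i)) \<or> (u = v (Suc i) \<and> w = v i)))"
  unfolding EP_def by (auto simp: doubleton_eq_iff)

lemma EG1_cases: "{u,w} \<in> EG1 \<longleftrightarrow> {u,w} \<in> E1 \<or> {u,w} \<in> E2 \<or> {u,w} \<in> EP"
  unfolding EG1_def by blast

lemma N_iff: "y \<in> N \<longleftrightarrow> {v l, y} \<in> E2"
  unfolding N_def nbrs_def by simp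

lemma N_mem: "y \<in> N \<Longrightarrow> y \<in> V2 \<and> y \<noteq> v l"
  using N_iff E2_mem by blast

lemma finN: "finite N" using N_mem finV2 by (metis finite_subset subsetI)

lemma N_ne: "N \<noteq> {}"
proof -
  obtain z where "z \<in> V2" "z \<noteq> v l"
    using card2_other[OF k2] by blast
  then obtain y where "{v l, y} \<in> E2" using connected_nbr[OF c2 bl] by blast
  then show ?thesis using N_iff by blast
qed

lemma R_iff: "{u,w} \<in> R \<longleftrightarrow> (u = v l \<and> w \<in> N) \<or> (w = v l \<and> u \<in> N)"
  unfolding R_def by (auto simp: doubleton_eq_iff)

lemma A_iff: "{u,w} \<in> A \<longleftrightarrow> (u = v 1 \<and> w \<in> N) \<or> (w = v 1 \<and> u \<in> N)"
  unfolding A_def by (auto simp: doubleton_eq_iff)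

lemma EG2_iff: "{u,w} \<in> EG2 \<longleftrightarrow> ({u,w} \<in> EG1 \<and> {u,w} \<notin> R) \<or> {u,w} \<in> A"
  unfolding EG2_def by blast

lemma EP_sub2: "EP \<subseteq> EG2"
proof
  fix e assume e: "e \<in> EP"
  then obtain i where i: "1 \<le> i" "i < l" "e = {v i, v (Suc i)}" unfolding EP_def by blast
  have "e \<notin> R"
  proof
    assume "e \<in> R"
    then have "(v i = v l \<and> v (Suc i) \<in> N) \<or> (v (Suc i) = v l \<and> v i \<in> N)" using R_iff i by simp
    then show False
    proof
      assume "v i = v l \<and> v (Suc i) \<in> N" then show False using pv_eq[of i l] i by auto
    next
      assume h: "v (Suc i) = v l \<and> v i \<in> N"
      then have "v i \<in> V2" using N_mem by blast
      then show False using pv_V2[of i] i by auto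
    qed
  qed
  then show "e \<in> EG2" using e unfolding EG2_def EG1_def by blast
qed

lemma EP_sub1: "EP \<subseteq> EG1" unfolding EG1_def by blast

lemma path_reach:
  assumes "EP \<subseteq> E" "1 \<le> i" "i \<le> j" "j \<le> l"
  shows "reach E (v i) (v j) \<and> gdist E (v i) (v j) \<le> j - i"
  using assms(3,4)
proof (induction j)
  case 0 then show ?case using assms by simp
next
  case (Suc j)
  show ?case
  proof (cases "i = Suc j")
    case True then show ?thesis by simp
  next
    case False
    then have ij: "i \<le> j" "j \<le> l" using Suc by auto
    have IH: "reach E (v i) (v j)" "gdist E (v i) (v j) \<le> j - i" using Suc.IH[OF ij] by simp_all
    have "1 \<le> j" "j < l" using assms(2) ij Suc.prems by auto
    then have "{v j, v (Suc j)} \<in> EP" unfolding EP_def by blast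
    then have e: "{v j, v (Suc j)} \<in> E" using assms(1) by blast
    have r: "reach E (v i) (v (Suc j))" using reach_trans[OF IH(1) reach_edge[OF e]] .
    have "gdist E (v i) (v (Suc j)) \<le> gdist E (v i) (v j) + gdist E (v j) (v (Suc j))"
      using gdist_tri[OF IH(1) reach_edge[OF e]] .
    also have "\<dots> \<le> (j - i) + 1" using IH(2) gdist_edge[OF e] by linarith
    finally show ?thesis using r ij by simp
  qed
qed

lemma EG1_VG: "{u,w} \<in> EG1 \<Longrightarrow> u \<in> VG \<and> w \<in> VG"
proof -
  assume e: "{u,w} \<in> EG1"
  consider "{u,w} \<in> E1" | "{u,w} \<in> E2" | "{u,w} \<in> EP" using e EG1_cases by blast
  then show ?thesis
  proof cases
    case 1 then show ?thesis using E1_mem unfolding VG_def by simp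
  next
    case 2 then show ?thesis using E2_mem unfolding VG_def by simp
  next
    case 3
    then obtain i where i: "1 \<le> i" "i < l" "(u = v i \<and> w = v (Suc i)) \<or> (u = v (Suc i) \<and> w = v i)"
      using EP_iff by blast
    have "v i \<in> VG" "v (Suc i) \<in> VG" using i unfolding VG_def by auto
    then show ?thesis using i(3) by auto
  qed
qed

lemma path_to_1: "EP \<subseteq> E \<Longrightarrow> i \<in> {1..l} \<Longrightarrow> reach E (v i) (v 1)"
proof -
  assume "EP \<subseteq> E" "i \<in> {1..l}"
  then have "reach E (v 1) (v i)" using path_reach[of E 1 i] by simp
  then show ?thesis by (rule reach_sym)
qed

lemma reach1_a: "x \<in> VG \<Longrightarrow> reach EG1 x (v 1)"
proof -
  assume x: "x \<in> VG"
  have sub1: "E1 \<subseteq> EG1" "E2 \<subseteq> EG1" unfolding EG1_def by auto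
  have pr: "\<And>i. i \<in> {1..l} \<Longrightarrow> reach EG1 (v i) (v 1)"
    using path_to_1[OF EP_sub1] .
  show ?thesis
  proof -
    { assume "x \<in> V1" then have "reach E1 x (v 1)" using connected_reach[OF c1 _ a1] by simp
      from reach_mono[OF this sub1(1)] have ?thesis . }
    moreover
    { assume "x \<in> V2"
      then have "reach E2 x (v l)" using connected_reach[OF c2 _ bl] by simp
      from reach_mono[OF this sub1(2)] have "reach EG1 x (v l)" .
      moreover have "reach EG1 (v l) (v 1)" using pr[of l] l2 by simp
      ultimately have ?thesis by (rule reach_trans) }
    moreover
    { assume "x \<in> v ` {1..l}" then have ?thesis using pr by blast }
    ultimately show ?thesis using x unfolding VG_def by blast
  qed
qed

lemma conn1: "u \<in> VG \<Longrightarrow> w \<in> VG \<Longrightarrow> reach EG1 u w"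
proof -
  assume "u \<in> VG" "w \<in> VG"
  then have "reach EG1 u (v 1)" "reach EG1 w (v 1)" using reach1_a by auto
  then show ?thesis using reach_trans reach_sym by metis
qed

definition "phi w = (if w \<in> V1 \<or> (w \<in> V2 \<and> w \<noteq> v l) then w else v 1)"

lemma phi_path: "i \<in> {1..l} \<Longrightarrow> phi (v i) = v 1"
  unfolding phi_def using pv_V1 pv_V2 by auto

lemma phi_VG: "phi x \<in> VG"
  unfolding phi_def VG_def using a1 by auto

lemma phi_edge: "{u,w} \<in> EG1 \<Longrightarrow> phi u = phi w \<or> {phi u, phi w} \<in> EG2"
proof -
  assume e: "{u,w} \<in> EG1"
  have notR_V: "\<And>u w. v l \<notin> {u,w} \<Longrightarrow> {u,w} \<notin> R" by (auto simp: R_iff)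
  consider "{u,w} \<in> E1" | "{u,w} \<in> E2" | "{u,w} \<in> EP" using e EG1_cases by blast
  then show ?thesis
  proof cases
    case 1
    then have "u \<in> V1" "w \<in> V1" using E1_mem by auto
    then have "v l \<notin> {u,w}" using bl disj by auto
    then have "{u,w} \<notin> R" by (rule notR_V)
    then have "{u,w} \<in> EG2" using e by (simp add: EG2_iff)
    then show ?thesis using \<open>u \<in> V1\<close> \<open>w \<in> V1\<close> unfolding phi_def by simp
  next
    case 2
    then have uw: "u \<in> V2" "w \<in> V2" "u \<noteq> w" using E2_mem by auto
    have n1: "u \<notin> V1" "w \<notin> V1" using uw disj by auto
    show ?thesis
    proof (cases "u = v l")
      case True
      then have "w \<in> N" using N_iff 2 by simp
      then have "{v 1, w} \<in> A" by (simp add: A_iff)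
      then have "{v 1, w} \<in> EG2" by (simp add: EG2_iff)
      then show ?thesis using True uw n1 unfolding phi_def by auto
    next
      case False
      show ?thesis
      proof (cases "w = v l")
        case True
        then have "u \<in> N" using N_iff 2 by (simp add: insert_commute)
        then have "{u, v 1} \<in> A" by (simp add: A_iff)
        then have "{u, v 1} \<in> EG2" by (simp add: EG2_iff)
        then show ?thesis using True False uw n1 unfolding phi_def by auto
      next
        case False2: False
        then have "v l \<notin> {u,w}" using False by auto
        then have "{u,w} \<notin> R" by (rule notR_V)
        then have "{u,w} \<in> EG2" using e by (simp add: EG2_iff)
        then show ?thesis using uw False False2 unfolding phi_def by auto
      qed
    qed
  next
    case 3
    then obtain i where i: "1 \<le> i" "i < l" "(u = v i \<and> w = v (Suc i)) \<or> (u = v (Suc i) \<and> w = v i)"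
      using EP_iff by blast
    then have "phi u = v 1" "phi w = v 1" using phi_path[of i] phi_path[of "Suc i"] by auto
    then show ?thesis by simp
  qed
qed

lemma phi_id: "x \<in> V1 \<or> (x \<in> V2 \<and> x \<noteq> v l) \<Longrightarrow> phi x = x"
  unfolding phi_def by simp

lemma phi_reach_edge: "{u,w} \<in> EG1 \<Longrightarrow> reach EG2 (phi u) (phi w)"
proof -
  assume h: "{u,w} \<in> EG1"
  show ?thesis
  proof (cases "phi u = phi w")
    case True then show ?thesis by simp
  next
    case False then have "{phi u, phi w} \<in> EG2" using phi_edge[OF h] by simp
    then show ?thesis by (rule reach_edge)
  qed
qed

lemma reach2_a: "x \<in> VG \<Longrightarrow> reach EG2 x (v 1)"
proof -
  assume x: "x \<in> VG"
  show ?thesis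
  proof (cases "x \<in> V1 \<or> (x \<in> V2 \<and> x \<noteq> v l)")
    case True
    have r1: "reach EG1 x (v 1)" using reach1_a[OF x] .
    have "reach EG2 (phi x) (phi (v 1))"
      using reach_map[of EG1 EG2 phi x "v 1", OF phi_reach_edge r1] .
    moreover have "phi x = x" using True by (rule phi_id)
    moreover have "phi (v 1) = v 1" using a1 by (simp add: phi_id)
    ultimately show ?thesis by simp
  next
    case False
    have "x \<in> v ` {1..l}"
    proof (cases "x \<in> V2")
      case True then have "x = v l" using False by simp
      then show ?thesis using l2 by simp
    next
      case False2: False then show ?thesis using x False unfolding VG_def by simp
    qed
    then obtain i where "i \<in> {1..l}" "x = v i" by blast
    then show ?thesis using path_to_1[OF EP_sub2] by simp
  qed
qed

lemma conn2: "u \<in> VG \<Longrightarrow> w \<in> VG \<Longrightarrow> reach EG2 u w"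
proof -
  assume "u \<in> VG" "w \<in> VG"
  then have "reach EG2 u (v 1)" "reach EG2 w (v 1)" using reach2_a by auto
  then show "reach EG2 u w" using reach_trans reach_sym by metis
qed

lemma phi_dist: "u \<in> VG \<Longrightarrow> w \<in> VG \<Longrightarrow> gdist EG2 (phi u) (phi w) \<le> gdist EG1 u w"
proof -
  assume uw: "u \<in> VG" "w \<in> VG"
  have t: "gdist EG2 x z \<le> gdist EG2 x y + gdist EG2 y z" if "x\<in>VG" "y\<in>VG" "z\<in>VG" for x y z
    using gdist_tri[OF conn2[OF that(1,2)] conn2[OF that(2,3)]] .
  have rf: "\<And>x. x\<in>VG \<Longrightarrow> gdist EG2 x x = 0" by simp
  have e: "gdist EG2 (phi u) (phi w) \<le> 1" if "{u,w}\<in>EG1" for u w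
  proof (cases "phi u = phi w")
    case True then show ?thesis by simp
  next
    case False then have "{phi u, phi w} \<in> EG2" using phi_edge[OF that] by simp
    then show ?thesis by (rule gdist_edge)
  qed
  have "gdist EG2 (phi u) (phi w) \<le> 1 * gdist EG1 u w"
    by (rule dist_map[of VG "gdist EG2" phi EG1 1, OF t rf phi_VG e conn1[OF uw]])
  then show ?thesis by simp
qed

end



context setup3 begin

definition "pidx w = inv_into {1..l} v w"

lemma pidx_v: "i \<in> {1..l} \<Longrightarrow> pidx (v i) = i"
  unfolding pidx_def using inj by (simp add: inv_into_f_f)

lemma VG_cases: "z \<in> VG \<Longrightarrow> z \<in> V1 \<or> (z \<in> V2 \<and> z \<noteq> v l) \<or> (\<exists>j\<in>{1..l}. z = v j)"
  unfolding VG_def using l2 by force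

lemma V1_VG: "x \<in> V1 \<Longrightarrow> x \<in> VG" unfolding VG_def by simp
lemma V2_VG: "x \<in> V2 \<Longrightarrow> x \<in> VG" unfolding VG_def by simp
lemma v_VG: "i \<in> {1..l} \<Longrightarrow> v i \<in> VG" unfolding VG_def by simp

lemma d1_lip: "x \<in> VG \<Longrightarrow> {u,w} \<in> EG1 \<Longrightarrow> \<bar>int (gdist EG1 x u) - int (gdist EG1 x w)\<bar> \<le> 1"
proof -
  assume x: "x \<in> VG" and e: "{u,w} \<in> EG1"
  have uw: "u \<in> VG" "w \<in> VG" using EG1_VG[OF e] by auto
  have e': "{w,u} \<in> EG1" using e by (simp add: insert_commute)
  have "gdist EG1 x w \<le> gdist EG1 x u + gdist EG1 u w"
    using gdist_tri[OF conn1[OF x uw(1)] conn1[OF uw(1) uw(2)]] .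
  moreover have "gdist EG1 x u \<le> gdist EG1 x w + gdist EG1 w u"
    using gdist_tri[OF conn1[OF x uw(2)] conn1[OF uw(2) uw(1)]] .
  moreover have "gdist EG1 u w \<le> 1" "gdist EG1 w u \<le> 1" using gdist_edge e e' by auto
  ultimately show ?thesis by linarith
qed

lemma LB1:
  assumes x: "x \<in> V1" and i: "i \<in> {1..l}"
  shows "gdist EG1 x (v 1) + i - 1 \<le> gdist EG1 x (v i)"
proof -
  define c where "c = int (gdist EG1 x (v 1))"
  define f where "f w = (if w \<in> V1 then int (gdist EG1 x w) else if w \<in> V2 then c + int l - 1
     else c + int (pidx w) - 1)" for w
  have fv: "f (v j) = c + int j - 1" if j: "j \<in> {1..l}" for j
  proof -
    consider "j = 1" | "j = l" "j \<noteq> 1" | "j \<noteq> 1" "j \<noteq> l" by blast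
    then show ?thesis
    proof cases
      case 1 then show ?thesis using a1 unfolding f_def c_def by simp
    next
      case 2 then show ?thesis using pv_V1[OF j] pv_V2[OF j] unfolding f_def by simp
    next
      case 3 then show ?thesis using pv_V1[OF j] pv_V2[OF j] pidx_v[OF j] unfolding f_def by simp
    qed
  qed
  have edge: "\<bar>f u - f w\<bar> \<le> 1" if e: "{u,w} \<in> EG1" for u w
  proof -
    consider "{u,w} \<in> E1" | "{u,w} \<in> E2" | "{u,w} \<in> EP" using e EG1_cases by blast
    then show ?thesis
    proof cases
      case 1
      then have "u \<in> V1" "w \<in> V1" using E1_mem by auto
      then show ?thesis using d1_lip[OF V1_VG[OF x] e] unfolding f_def by simp
    next
      case 2
      then have "u \<in> V2" "w \<in> V2" using E2_mem by auto
      then have "u \<notin> V1" "w \<notin> V1" using disj by auto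
      then show ?thesis using \<open>u \<in> V2\<close> \<open>w \<in> V2\<close> unfolding f_def by simp
    next
      case 3
      then obtain k where k: "1 \<le> k" "k < l" "(u = v k \<and> w = v (Suc k)) \<or> (u = v (Suc k) \<and> w = v k)"
        using EP_iff by blast
      have "f (v k) = c + int k - 1" "f (v (Suc k)) = c + int (Suc k) - 1" using fv k by auto
      then show ?thesis using k by auto
    qed
  qed
  have "\<bar>f x - f (v i)\<bar> \<le> int (gdist EG1 x (v i))"
    using lip[where E=EG1 and f=f and u=x and w="v i", OF edge conn1[OF V1_VG[OF x] v_VG[OF i]]] .
  moreover have "f x = 0" using x unfolding f_def by simp
  ultimately show ?thesis using fv[OF i] i unfolding c_def by auto
qed

lemma LB2:
  assumes y: "y \<in> V2" and i: "i \<in> {1..l}"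
  shows "gdist EG1 y (v l) + (l - i) \<le> gdist EG1 y (v i)"
proof -
  define c where "c = int (gdist EG1 y (v l))"
  define f where "f w = (if w \<in> V2 then int (gdist EG1 y w) else if w \<in> V1 then c + int l - 1
     else c + int l - int (pidx w))" for w
  have fv: "f (v j) = c + int l - int j" if j: "j \<in> {1..l}" for j
  proof -
    consider "j = l" | "j = 1" "j \<noteq> l" | "j \<noteq> 1" "j \<noteq> l" by blast
    then show ?thesis
    proof cases
      case 1 then show ?thesis using bl unfolding f_def c_def by simp
    next
      case 2 then show ?thesis using pv_V1[OF j] pv_V2[OF j] unfolding f_def by simp
    next
      case 3 then show ?thesis using pv_V1[OF j] pv_V2[OF j] pidx_v[OF j] unfolding f_def by simp
    qed
  qed
  have edge: "\<bar>f u - f w\<bar> \<le> 1" if e: "{u,w} \<in> EG1" for u w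
  proof -
    consider "{u,w} \<in> E1" | "{u,w} \<in> E2" | "{u,w} \<in> EP" using e EG1_cases by blast
    then show ?thesis
    proof cases
      case 2
      then have "u \<in> V2" "w \<in> V2" using E2_mem by auto
      then show ?thesis using d1_lip[OF V2_VG[OF y] e] unfolding f_def by simp
    next
      case 1
      then have "u \<in> V1" "w \<in> V1" using E1_mem by auto
      then have "u \<notin> V2" "w \<notin> V2" using disj by auto
      then show ?thesis using \<open>u \<in> V1\<close> \<open>w \<in> V1\<close> unfolding f_def by simp
    next
      case 3
      then obtain k where k: "1 \<le> k" "k < l" "(u = v k \<and> w = v (Suc k)) \<or> (u = v (Suc k) \<and> w = v k)"
        using EP_iff by blast
      have "f (v k) = c + int l - int k" "f (v (Suc k)) = c + int l - int (Suc k)" using fv k by auto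
      then show ?thesis using k by auto
    qed
  qed
  have "\<bar>f y - f (v i)\<bar> \<le> int (gdist EG1 y (v i))"
    using lip[where E=EG1 and f=f and u=y and w="v i", OF edge conn1[OF V2_VG[OF y] v_VG[OF i]]] .
  moreover have "f y = 0" using y unfolding f_def by simp
  ultimately show ?thesis using fv[OF i] i unfolding c_def by auto
qed

lemma LB3:
  assumes z: "z \<in> V1 \<or> (z \<in> V2 \<and> z \<noteq> v l)"
  shows "(if z \<in> V1 then gdist EG1 (v 1) z else gdist EG1 (v l) z) + (l - 1) \<le> gdist EG2 (v l) z"
proof -
  define f where "f w = (if w \<in> V1 then - int (gdist EG1 (v 1) w)
     else if w \<in> V2 \<and> w \<noteq> v l then - int (gdist EG1 (v l) w) else int (pidx w) - 1)" for w
  have fv: "f (v j) = int j - 1" if j: "j \<in> {1..l}" for j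
  proof -
    consider "j = 1" | "j = l" "j \<noteq> 1" | "j \<noteq> 1" "j \<noteq> l" by blast
    then show ?thesis
    proof cases
      case 1 then show ?thesis using a1 unfolding f_def by simp
    next
      case 2 then show ?thesis using pv_V1[OF j] pidx_v[OF j] unfolding f_def by simp
    next
      case 3 then show ?thesis using pv_V1[OF j] pv_V2[OF j] pidx_v[OF j] unfolding f_def by simp
    qed
  qed
  have edge: "\<bar>f u - f w\<bar> \<le> 1" if e: "{u,w} \<in> EG2" for u w
  proof -
    consider "{u,w} \<in> EG1" "{u,w} \<notin> R" | "{u,w} \<in> A" using e EG2_iff by blast
    then show ?thesis
    proof cases
      case 1
      consider "{u,w} \<in> E1" | "{u,w} \<in> E2" | "{u,w} \<in> EP" using 1 EG1_cases by blast
      then show ?thesis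
      proof cases
        case 1
        then have "u \<in> V1" "w \<in> V1" using E1_mem by auto
        have h: "\<bar>int (gdist EG1 (v 1) u) - int (gdist EG1 (v 1) w)\<bar> \<le> 1"
          using d1_lip[OF V1_VG[OF a1] \<open>{u,w} \<in> EG1\<close>] .
        show ?thesis using h \<open>u \<in> V1\<close> \<open>w \<in> V1\<close> unfolding f_def by (simp add: abs_le_iff)
      next
        case 2
        then have uw: "u \<in> V2" "w \<in> V2" using E2_mem by auto
        have "u \<noteq> v l"
        proof
          assume "u = v l" then have "w \<in> N" using 2 N_iff by simp
          then show False using \<open>{u,w} \<notin> R\<close> R_iff \<open>u = v l\<close> by blast
        qed
        moreover have "w \<noteq> v l"
        proof
          assume "w = v l" then have "u \<in> N" using 2 N_iff by (simp add: insert_commute)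
          then show False using \<open>{u,w} \<notin> R\<close> R_iff \<open>w = v l\<close> by blast
        qed
        moreover have "u \<notin> V1" "w \<notin> V1" using uw disj by auto
        moreover have h: "\<bar>int (gdist EG1 (v l) u) - int (gdist EG1 (v l) w)\<bar> \<le> 1"
          using d1_lip[OF V2_VG[OF bl] \<open>{u,w} \<in> EG1\<close>] .
        ultimately show ?thesis using uw unfolding f_def by (simp add: abs_le_iff)
      next
        case 3
        then obtain k where k: "1 \<le> k" "k < l" "(u = v k \<and> w = v (Suc k)) \<or> (u = v (Suc k) \<and> w = v k)"
          using EP_iff by blast
        have "f (v k) = int k - 1" "f (v (Suc k)) = int (Suc k) - 1" using fv k by auto
        then show ?thesis using k by auto
      qed
    next
      case 2
      have key: "\<bar>f (v 1) - f y\<bar> \<le> 1" if y: "y \<in> N" for y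
      proof -
        have yy: "y \<in> V2" "y \<noteq> v l" using N_mem y by auto
        have "y \<notin> V1" using yy disj by auto
        have "{v l, y} \<in> EG1" using y N_iff unfolding EG1_def by blast
        then have "gdist EG1 (v l) y \<le> 1" by (rule gdist_edge)
        moreover have "f (v 1) = 0" using fv[of 1] l2 by simp
        ultimately show ?thesis using yy \<open>y \<notin> V1\<close> unfolding f_def by simp
      qed
      from 2 consider "u = v 1" "w \<in> N" | "w = v 1" "u \<in> N" using A_iff by blast
      then show ?thesis
      proof cases
        case 1 then show ?thesis using key by simp
      next
        case 2 then show ?thesis using key[of u] by simp
      qed
    qed
  qed
  have zVG: "z \<in> VG" using z V1_VG V2_VG by blast
  have "\<bar>f (v l) - f z\<bar> \<le> int (gdist EG2 (v l) z)"
    using lip[where E=EG2 and f=f and u="v l" and w=z, OF edge conn2[OF v_VG zVG]] l2 by simp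
  moreover have "f (v l) = int l - 1" using fv[of l] l2 by simp
  ultimately show ?thesis using z l2 unfolding f_def by (auto split: if_splits)
qed

lemma pd2: "i \<in> {1..l} \<Longrightarrow> j \<in> {1..l} \<Longrightarrow> gdist EG2 (v i) (v j) \<le> (if i \<le> j then j - i else i - j)"
proof -
  assume i: "i \<in> {1..l}" and j: "j \<in> {1..l}"
  show ?thesis
  proof (cases "i \<le> j")
    case True then show ?thesis using path_reach[OF EP_sub2, of i j] i j by auto
  next
    case False
    then have "gdist EG2 (v j) (v i) \<le> i - j" using path_reach[OF EP_sub2, of j i] i j by auto
    moreover have "gdist EG2 (v i) (v j) = gdist EG2 (v j) (v i)"
      using gdist_sym[OF conn2[OF v_VG[OF i] v_VG[OF j]]] .
    ultimately show ?thesis using False by simp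
  qed
qed

end



context setup3 begin

definition "e1 = Max (gdist EG1 (v 1) ` V1)"
definition "e2 = Max (gdist EG1 (v l) ` V2)"

lemma e1_ge: "z \<in> V1 \<Longrightarrow> gdist EG1 (v 1) z \<le> e1"
  unfolding e1_def using finV1 by simp
lemma e2_ge: "z \<in> V2 \<Longrightarrow> gdist EG1 (v l) z \<le> e2"
  unfolding e2_def using finV2 by simp
lemma e1_att: "\<exists>z\<in>V1. gdist EG1 (v 1) z = e1"
proof -
  have "e1 \<in> gdist EG1 (v 1) ` V1" unfolding e1_def using finV1 a1 by (intro Max_in) auto
  then show ?thesis by auto
qed
lemma e2_att: "\<exists>z\<in>V2. gdist EG1 (v l) z = e2"
proof -
  have "e2 \<in> gdist EG1 (v l) ` V2" unfolding e2_def using finV2 bl by (intro Max_in) auto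
  then show ?thesis by auto
qed

lemma e1_pos: "1 \<le> e1"
proof -
  obtain z where z: "z \<in> V1" "z \<noteq> v 1" using card2_other[OF k1] by blast
  have "gdist EG1 (v 1) z \<noteq> 0"
  proof
    assume "gdist EG1 (v 1) z = 0"
    then have "v 1 = z" using gdist_zero[OF conn1[OF V1_VG[OF a1] V1_VG[OF z(1)]]] by simp
    then show False using z by simp
  qed
  moreover have "gdist EG1 (v 1) z \<le> e1" using e1_ge[OF z(1)] .
  ultimately show ?thesis by linarith
qed

lemma dsym1: "x \<in> VG \<Longrightarrow> y \<in> VG \<Longrightarrow> gdist EG1 x y = gdist EG1 y x"
  by (rule gdist_sym[OF conn1])
lemma dsym2: "x \<in> VG \<Longrightarrow> y \<in> VG \<Longrightarrow> gdist EG2 x y = gdist EG2 y x"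
  by (rule gdist_sym[OF conn2])
lemma tri2: "x \<in> VG \<Longrightarrow> y \<in> VG \<Longrightarrow> z \<in> VG \<Longrightarrow> gdist EG2 x z \<le> gdist EG2 x y + gdist EG2 y z"
  by (rule gdist_tri[OF conn2 conn2])

lemma ecc1_ge: "z \<in> VG \<Longrightarrow> gdist EG1 x z \<le> ecc VG EG1 x" by (rule ecc_ge[OF finVG])
lemma ecc2_ge: "z \<in> VG \<Longrightarrow> gdist EG2 x z \<le> ecc VG EG2 x" by (rule ecc_ge[OF finVG])
lemma VG_ne: "VG \<noteq> {}" using V1_VG[OF a1] by auto
lemma ecc2_att: "\<exists>z\<in>VG. ecc VG EG2 x = gdist EG2 x z"
  by (rule ecc_attained[OF finVG VG_ne])

lemma d2a: "i \<in> {1..l} \<Longrightarrow> gdist EG2 (v 1) (v i) \<le> i - 1"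
  using pd2[of 1 i] by simp

lemma P1:
  assumes x: "x \<in> V1 \<or> (x \<in> V2 \<and> x \<noteq> v l)"
  shows "ecc VG EG2 x \<le> ecc VG EG1 x"
proof -
  have xVG: "x \<in> VG" using x V1_VG V2_VG by blast
  obtain z where z: "z \<in> VG" "ecc VG EG2 x = gdist EG2 x z" using ecc2_att by blast
  have "gdist EG2 x z \<le> ecc VG EG1 x"
  proof (cases "z \<in> V1 \<or> (z \<in> V2 \<and> z \<noteq> v l)")
    case True
    have "gdist EG2 (phi x) (phi z) \<le> gdist EG1 x z" using phi_dist[OF xVG z(1)] .
    moreover have "phi x = x" "phi z = z" using phi_id x True by auto
    ultimately have "gdist EG2 x z \<le> gdist EG1 x z" by simp
    also have "\<dots> \<le> ecc VG EG1 x" using ecc1_ge[OF z(1)] .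
    finally show ?thesis .
  next
    case False
    then obtain i where i: "i \<in> {1..l}" "z = v i" using z(1) VG_cases by blast
    have "gdist EG2 x z \<le> gdist EG2 x (v 1) + gdist EG2 (v 1) (v i)"
      using tri2[OF xVG V1_VG[OF a1] v_VG[OF i(1)]] i by simp
    also have "\<dots> \<le> gdist EG2 x (v 1) + (l - 1)"
    proof -
      have h1: "gdist EG2 (v 1) (v i) \<le> i - 1" using d2a[OF i(1)] .
      have h2: "i \<le> l" using i(1) by simp
      show ?thesis using h1 h2 by linarith
    qed
    also have "\<dots> \<le> ecc VG EG1 x"
    proof (cases "x \<in> V1")
      case True
      have "gdist EG2 (phi x) (phi (v 1)) \<le> gdist EG1 x (v 1)" using phi_dist[OF xVG V1_VG[OF a1]] .
      moreover have "phi x = x" "phi (v 1) = v 1" using phi_id True a1 by auto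
      ultimately have "gdist EG2 x (v 1) \<le> gdist EG1 x (v 1)" by simp
      moreover have "gdist EG1 x (v 1) + l - 1 \<le> gdist EG1 x (v l)" using LB1[OF True, of l] l2 by simp
      moreover have "gdist EG1 x (v l) \<le> ecc VG EG1 x" using ecc1_ge v_VG l2 by simp
      ultimately show ?thesis using l2 by linarith
    next
      case False
      then have x2: "x \<in> V2" "x \<noteq> v l" using x by auto
      have "gdist EG2 (phi x) (phi (v l)) \<le> gdist EG1 x (v l)" using phi_dist[OF xVG v_VG] l2 by simp
      moreover have "phi x = x" using phi_id x2 by auto
      moreover have "phi (v l) = v 1" using phi_path l2 by simp
      ultimately have "gdist EG2 x (v 1) \<le> gdist EG1 x (v l)" by simp
      moreover have "gdist EG1 x (v l) + (l - 1) \<le> gdist EG1 x (v 1)" using LB2[OF x2(1), of 1] l2 by simp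
      moreover have "gdist EG1 x (v 1) \<le> ecc VG EG1 x" using ecc1_ge V1_VG[OF a1] by simp
      ultimately show ?thesis by linarith
    qed
    finally show ?thesis .
  qed
  then show ?thesis using z by simp
qed

lemma P2:
  assumes i: "i \<in> {1..l}"
  shows "ecc VG EG2 (v i) \<le> max (i - 1 + max e1 e2) (l - i)"
proof -
  have viVG: "v i \<in> VG" using v_VG[OF i] .
  have a1VG: "v 1 \<in> VG" using V1_VG[OF a1] .
  obtain z where z: "z \<in> VG" "ecc VG EG2 (v i) = gdist EG2 (v i) z" using ecc2_att by blast
  have via: "gdist EG2 (v i) (v 1) \<le> i - 1" using d2a[OF i] dsym2[OF viVG a1VG] by simp
  consider "z \<in> V1" | "z \<in> V2" "z \<noteq> v l" | j where "j \<in> {1..l}" "z = v j" using VG_cases[OF z(1)] by blast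
  then have "gdist EG2 (v i) z \<le> max (i - 1 + max e1 e2) (l - i)"
  proof cases
    case 1
    have "gdist EG2 (v i) z \<le> gdist EG2 (v i) (v 1) + gdist EG2 (v 1) z" using tri2[OF viVG a1VG z(1)] .
    moreover have "gdist EG2 (phi (v 1)) (phi z) \<le> gdist EG1 (v 1) z" using phi_dist[OF a1VG z(1)] .
    moreover have "phi (v 1) = v 1" "phi z = z" using phi_id a1 1 by auto
    moreover have "gdist EG1 (v 1) z \<le> e1" using e1_ge[OF 1] .
    ultimately show ?thesis using via by simp
  next
    case 2
    have "gdist EG2 (v i) z \<le> gdist EG2 (v i) (v 1) + gdist EG2 (v 1) z" using tri2[OF viVG a1VG z(1)] .
    moreover have "gdist EG2 (phi (v l)) (phi z) \<le> gdist EG1 (v l) z" using phi_dist[OF v_VG z(1)] l2 by simp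
    moreover have "phi (v l) = v 1" using phi_path l2 by simp
    moreover have "phi z = z" using phi_id 2 by auto
    moreover have "gdist EG1 (v l) z \<le> e2" using e2_ge 2 by simp
    ultimately show ?thesis using via by simp
  next
    case 3
    have "gdist EG2 (v i) (v j) \<le> (if i \<le> j then j - i else i - j)" using pd2[OF i 3(1)] .
    then show ?thesis
    proof (cases "i \<le> j")
      case True
      then have "gdist EG2 (v i) (v j) \<le> j - i" using \<open>gdist EG2 (v i) (v j) \<le> _\<close> by simp
      moreover have "j \<le> l" using 3 by simp
      ultimately show ?thesis using 3 by simp
    next
      case False
      then have "gdist EG2 (v i) (v j) \<le> i - j" using \<open>gdist EG2 (v i) (v j) \<le> _\<close> by simp
      moreover have "1 \<le> j" using 3 by simp
      ultimately show ?thesis using 3 by simp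
    qed
  qed
  then show ?thesis using z by simp
qed

lemma P3:
  assumes i: "i \<in> {1..l}"
  shows "i - 1 + e1 \<le> ecc VG EG1 (v i) \<and> l - i + e2 \<le> ecc VG EG1 (v i)"
proof -
  obtain za where za: "za \<in> V1" "gdist EG1 (v 1) za = e1" using e1_att by blast
  obtain zb where zb: "zb \<in> V2" "gdist EG1 (v l) zb = e2" using e2_att by blast
  have viVG: "v i \<in> VG" using v_VG[OF i] .
  have "gdist EG1 za (v 1) + i - 1 \<le> gdist EG1 za (v i)" using LB1[OF za(1) i] .
  moreover have "gdist EG1 za (v 1) = e1" using za dsym1[OF V1_VG[OF za(1)] V1_VG[OF a1]] by simp
  moreover have "gdist EG1 za (v i) = gdist EG1 (v i) za" using dsym1[OF V1_VG[OF za(1)] viVG] .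
  moreover have "gdist EG1 (v i) za \<le> ecc VG EG1 (v i)" using ecc1_ge[OF V1_VG[OF za(1)]] .
  ultimately have A: "i - 1 + e1 \<le> ecc VG EG1 (v i)" using i by simp
  have "gdist EG1 zb (v l) + (l - i) \<le> gdist EG1 zb (v i)" using LB2[OF zb(1) i] .
  moreover have "gdist EG1 zb (v l) = e2" using zb dsym1[OF V2_VG[OF zb(1)] V2_VG[OF bl]] by simp
  moreover have "gdist EG1 zb (v i) = gdist EG1 (v i) zb" using dsym1[OF V2_VG[OF zb(1)] viVG] .
  moreover have "gdist EG1 (v i) zb \<le> ecc VG EG1 (v i)" using ecc1_ge[OF V2_VG[OF zb(1)]] .
  ultimately have B: "l - i + e2 \<le> ecc VG EG1 (v i)" by simp
  show ?thesis using A B by simp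
qed

lemma P4: "l - 1 + max e1 e2 \<le> ecc VG EG2 (v l)"
proof -
  obtain za where za: "za \<in> V1" "gdist EG1 (v 1) za = e1" using e1_att by blast
  obtain zb where zb: "zb \<in> V2" "gdist EG1 (v l) zb = e2" using e2_att by blast
  have "gdist EG1 (v 1) za + (l - 1) \<le> gdist EG2 (v l) za" using LB3[of za] za(1) by simp
  moreover have "gdist EG2 (v l) za \<le> ecc VG EG2 (v l)" using ecc2_ge[OF V1_VG[OF za(1)]] .
  ultimately have A: "l - 1 + e1 \<le> ecc VG EG2 (v l)" using za(2) by simp
  have B: "l - 1 + e2 \<le> ecc VG EG2 (v l)"
  proof (cases "zb = v l")
    case True
    then have "e2 = 0" using zb(2) by simp
    then show ?thesis using A by simp
  next
    case False
    have "zb \<notin> V1" using zb(1) disj by auto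
    then have "gdist EG1 (v l) zb + (l - 1) \<le> gdist EG2 (v l) zb" using LB3[of zb] zb(1) False by simp
    moreover have "gdist EG2 (v l) zb \<le> ecc VG EG2 (v l)" using ecc2_ge[OF V2_VG[OF zb(1)]] .
    ultimately show ?thesis using zb(2) by simp
  qed
  show ?thesis using A B by simp
qed

lemma A2_lt_B2: "ecc VG EG2 (v 1) < ecc VG EG2 (v l)"
proof -
  have "ecc VG EG2 (v 1) \<le> max (max e1 e2) (l - 1)" using P2[of 1] l2 by simp
  moreover have "l - 1 + max e1 e2 \<le> ecc VG EG2 (v l)" using P4 .
  moreover have "1 \<le> max e1 e2" using e1_pos by simp
  ultimately show ?thesis using l2 by linarith
qed

end



lemma sum2:
  fixes g :: "'a \<Rightarrow> real"
  assumes fin: "finite V" and pq: "p \<in> V" "q \<in> V" "p \<noteq> q"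
  shows "sum g V = g p + g q + sum g (V - {p,q})"
proof -
  have "sum g V = g p + sum g (V - {p})" using sum.remove[OF fin pq(1)] .
  also have "sum g (V - {p}) = g q + sum g (V - {p} - {q})"
    using sum.remove[of "V - {p}" q g] fin pq by simp
  also have "V - {p} - {q} = V - {p,q}" by auto
  finally show ?thesis by (simp add: add.assoc)
qed

lemma final_sum:
  fixes F1 F2 :: "'a \<Rightarrow> real"
  assumes fin: "finite V" and pq: "p \<in> V" "q \<in> V" "p \<noteq> q" and bij: "bij_betw \<sigma> V V"
    and le: "\<And>x. x \<in> V - {p,q} \<Longrightarrow> F1 (\<sigma> x) \<le> F2 x"
    and lt: "F1 (\<sigma> p) + F1 (\<sigma> q) < F2 p + F2 q"
  shows "sum F1 V < sum F2 V"
proof -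
  have "sum F1 V = sum (\<lambda>x. F1 (\<sigma> x)) V" using sum.reindex_bij_betw[OF bij, of F1] by simp
  also have "\<dots> = F1 (\<sigma> p) + F1 (\<sigma> q) + sum (\<lambda>x. F1 (\<sigma> x)) (V - {p,q})"
    by (rule sum2[OF fin pq])
  also have "\<dots> < F2 p + F2 q + sum F2 (V - {p,q})"
    using lt sum_mono[of "V - {p,q}" "\<lambda>x. F1 (\<sigma> x)" F2] le by fastforce
  also have "\<dots> = sum F2 V"
    by (rule sum2[OF fin pq, symmetric])
  finally show ?thesis .
qed

lemma ab_ineq: fixes D d A1 B1 A2 B2 :: real
  assumes "0<A2" "A2<B2" "A2 \<le> A1" "B2 \<le> B1" "d \<ge> 1" "D \<ge> 0"
  shows "D/A1 + (d+1)/B1 < (D+d)/A2 + 1/B2"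
proof -
  have "D/A1 \<le> D/A2" using assms by (intro divide_left_mono) auto
  moreover have "(d+1)/B1 \<le> (d+1)/B2" using assms by (intro divide_left_mono) auto
  moreover have "d/B2 < d/A2" using assms by (intro divide_strict_left_mono) auto
  moreover have "(d+1)/B2 = d/B2 + 1/B2" "(D+d)/A2 = D/A2 + d/A2" by (simp_all add: add_divide_distrib)
  ultimately show ?thesis by linarith
qed

lemma ab_ineq2: fixes D d A1 B1 A2 B2 :: real
  assumes "0<A2" "A2<B2" "A2 \<le> B1" "B2 \<le> A1" "d \<ge> 0" "D \<ge> 2"
  shows "(d+1)/B1 + D/A1 < (D+d)/A2 + 1/B2"
proof -
  have "D/A1 \<le> D/B2" using assms by (intro divide_left_mono) auto
  moreover have "(d+1)/B1 \<le> (d+1)/A2" using assms by (intro divide_left_mono) auto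
  moreover have "(D-1)/B2 < (D-1)/A2" using assms by (intro divide_strict_left_mono) auto
  moreover have "D/B2 = (D-1)/B2 + 1/B2" "(D+d)/A2 = (D-1)/A2 + (d+1)/A2" by (simp_all add: diff_divide_distrib add_divide_distrib)
  ultimately show ?thesis by linarith
qed

context setup3 begin

lemma onpath_V2: "j \<in> {1..l} \<Longrightarrow> v j \<in> V2 \<Longrightarrow> v j = v l"
  using pv_V2 by simp

lemma nbrs1_VG: "nbrs EG1 x \<subseteq> VG"
  unfolding nbrs_def using EG1_VG by blast

lemma fin_nbrs1: "finite (nbrs EG1 x)"
  using finite_subset[OF nbrs1_VG finVG] .

lemma v1_notin_N: "v 1 \<notin> N" using N_mem a1 disj by blast
lemma vl_notin_N: "v l \<notin> N" using N_mem by blast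

lemma EP_ends: "{u,y} \<in> EP \<Longrightarrow> \<exists>j\<in>{1..l}. y = v j"
proof -
  assume "{u,y} \<in> EP"
  then obtain k where k: "1 \<le> k" "k < l" "(u = v k \<and> y = v (Suc k)) \<or> (u = v (Suc k) \<and> y = v k)"
    using EP_iff by blast
  have "k \<in> {1..l}" "Suc k \<in> {1..l}" using k by auto
  then show ?thesis using k(3) by blast
qed

lemma deg_other:
  assumes x: "x \<in> VG" "x \<noteq> v 1" "x \<noteq> v l"
  shows "degree EG2 x = degree EG1 x"
proof (cases "x \<in> N")
  case False
  have "nbrs EG2 x = nbrs EG1 x"
    unfolding nbrs_def using x False by (auto simp: EG2_iff R_iff A_iff)
  then show ?thesis unfolding degree_def by simp
next
  case True
  have xV2: "x \<in> V2" using N_mem True by blast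
  have eq: "nbrs EG2 x = insert (v 1) (nbrs EG1 x - {v l})"
  proof -
    have "{x, v 1} \<in> A" using True by (simp add: A_iff)
    then have "{x, v 1} \<in> EG2" by (simp add: EG2_iff)
    moreover have "\<And>y. {x,y} \<in> EG2 \<longleftrightarrow> ({x,y} \<in> EG1 \<and> y \<noteq> v l) \<or> y = v 1"
      using x True by (auto simp: EG2_iff R_iff A_iff)
    ultimately show ?thesis unfolding nbrs_def by auto
  qed
  have inl: "v l \<in> nbrs EG1 x"
  proof -
    have "{v l, x} \<in> E2" using True N_iff by simp
    then have "{x, v l} \<in> EG1" unfolding EG1_def by (simp add: insert_commute)
    then show ?thesis unfolding nbrs_def by simp
  qed
  have nin1: "v 1 \<notin> nbrs EG1 x"
  proof
    assume "v 1 \<in> nbrs EG1 x"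
    then have e: "{x, v 1} \<in> EG1" unfolding nbrs_def by simp
    consider "{x, v 1} \<in> E1" | "{x, v 1} \<in> E2" | "{x, v 1} \<in> EP" using e EG1_cases by blast
    then show False
    proof cases
      case 1 then show False using E1_mem xV2 disj by blast
    next
      case 2 then show False using E2_mem a1 disj by blast
    next
      case 3
      then have "{v 1, x} \<in> EP" by (simp add: insert_commute)
      then obtain j where "j \<in> {1..l}" "x = v j" using EP_ends by blast
      then show False using onpath_V2 xV2 x(3) by blast
    qed
  qed
  have "card (nbrs EG2 x) = card (nbrs EG1 x)"
  proof -
    have "card (nbrs EG2 x) = Suc (card (nbrs EG1 x - {v l}))"
      unfolding eq using nin1 fin_nbrs1 by (simp add: card_insert_disjoint)
    also have "\<dots> = card (nbrs EG1 x)"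
    proof -
      have "card (nbrs EG1 x - {v l}) = card (nbrs EG1 x) - 1" using inl by (rule card_Diff_singleton)
      moreover have "card (nbrs EG1 x) > 0" using inl fin_nbrs1 card_gt_0_iff by blast
      ultimately show ?thesis by simp
    qed
    finally show ?thesis .
  qed
  then show ?thesis unfolding degree_def .
qed

lemma deg_a: "degree EG2 (v 1) = degree EG1 (v 1) + card N"
proof -
  have eq: "nbrs EG2 (v 1) = nbrs EG1 (v 1) \<union> N"
    unfolding nbrs_def using v1_ne_vl v1_notin_N by (auto simp: EG2_iff R_iff A_iff)
  have dj: "nbrs EG1 (v 1) \<inter> N = {}"
  proof (rule ccontr)
    assume "nbrs EG1 (v 1) \<inter> N \<noteq> {}"
    then obtain y where y: "y \<in> N" "{v 1, y} \<in> EG1" unfolding nbrs_def by blast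
    have yy: "y \<in> V2" "y \<noteq> v l" using N_mem y(1) by auto
    consider "{v 1, y} \<in> E1" | "{v 1, y} \<in> E2" | "{v 1, y} \<in> EP" using y(2) EG1_cases by blast
    then show False
    proof cases
      case 1 then show False using E1_mem yy disj by blast
    next
      case 2 then show False using E2_mem a1 disj by blast
    next
      case 3
      then obtain j where "j \<in> {1..l}" "y = v j" using EP_ends by blast
      then show False using onpath_V2 yy by blast
    qed
  qed
  show ?thesis unfolding degree_def eq using dj fin_nbrs1 finN by (simp add: card_Un_disjoint)
qed

lemma vlm1: "l - 1 \<in> {1..l}" "v (l - 1) \<notin> N" "v (l-1) \<noteq> v l"
proof -
  show l1: "l - 1 \<in> {1..l}" using l2 by simp
  show "v (l - 1) \<noteq> v l" using pv_eq[OF l1, of l] l2 by simp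
  then show "v (l - 1) \<notin> N" using N_mem onpath_V2[OF l1] by blast
qed

lemma nbrs1_b: "nbrs EG1 (v l) = insert (v (l - 1)) N"
proof -
  have "{v l, y} \<in> EG1 \<longleftrightarrow> y \<in> N \<or> y = v (l - 1)" for y
  proof
    assume e: "{v l, y} \<in> EG1"
    consider "{v l, y} \<in> E1" | "{v l, y} \<in> E2" | "{v l, y} \<in> EP" using e EG1_cases by blast
    then show "y \<in> N \<or> y = v (l - 1)"
    proof cases
      case 1 then show ?thesis using E1_mem bl disj by blast
    next
      case 2 then show ?thesis using N_iff by simp
    next
      case 3
      then obtain k where k: "1 \<le> k" "k < l" "(v l = v k \<and> y = v (Suc k)) \<or> (v l = v (Suc k) \<and> y = v k)"
        using EP_iff by blast
      have "v l \<noteq> v k" using pv_eq[of l k] k l2 by simp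
      then have "v l = v (Suc k)" "y = v k" using k by auto
      then have "Suc k = l" using pv_eq[of l "Suc k"] k l2 by simp
      then show ?thesis using \<open>y = v k\<close> by auto
    qed
  next
    assume "y \<in> N \<or> y = v (l - 1)"
    then show "{v l, y} \<in> EG1"
    proof
      assume "y \<in> N" then show ?thesis using N_iff unfolding EG1_def by simp
    next
      assume y: "y = v (l - 1)"
      have "Suc (l - 1) = l" using l2 by simp
      then have "{v l, y} = {v (Suc (l-1)), v (l - 1)}" using y by simp
      also have "\<dots> \<in> EP" unfolding EP_iff using l2 by (intro exI[of _ "l - 1"]) simp
      finally show ?thesis unfolding EG1_def by simp
    qed
  qed
  then show ?thesis unfolding nbrs_def by auto
qed

lemma deg1_b: "degree EG1 (v l) = card N + 1"
  unfolding degree_def nbrs1_b using vlm1 finN by simp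

lemma deg2_b: "degree EG2 (v l) = 1"
proof -
  have "{v l, y} \<in> EG2 \<longleftrightarrow> y = v (l - 1)" for y
  proof -
    have "{v l, y} \<in> EG2 \<longleftrightarrow> ({v l, y} \<in> EG1 \<and> y \<notin> N)"
      using vl_notin_N v1_ne_vl by (auto simp: EG2_iff R_iff A_iff)
    also have "\<dots> \<longleftrightarrow> y = v (l - 1)" using nbrs1_b vlm1 unfolding nbrs_def by blast
    finally show ?thesis .
  qed
  then have "nbrs EG2 (v l) = {v (l - 1)}" unfolding nbrs_def by auto
  then show ?thesis unfolding degree_def by simp
qed

lemma deg_int:
  assumes i: "i \<in> {2..<l}"
  shows "degree EG1 (v i) = 2"
proof -
  have i1: "i \<in> {1..l}" "i - 1 \<in> {1..l}" "Suc i \<in> {1..l}" using i by auto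
  have nV: "v i \<notin> V1" "v i \<notin> V2" using intr i by auto
  have "{v i, y} \<in> EG1 \<longleftrightarrow> y = v (i - 1) \<or> y = v (Suc i)" for y
  proof
    assume e: "{v i, y} \<in> EG1"
    consider "{v i, y} \<in> E1" | "{v i, y} \<in> E2" | "{v i, y} \<in> EP" using e EG1_cases by blast
    then show "y = v (i - 1) \<or> y = v (Suc i)"
    proof cases
      case 1 then show ?thesis using E1_mem nV by blast
    next
      case 2 then show ?thesis using E2_mem nV by blast
    next
      case 3
      then obtain k where k: "1 \<le> k" "k < l" "(v i = v k \<and> y = v (Suc k)) \<or> (v i = v (Suc k) \<and> y = v k)"
        using EP_iff by blast
      have k1: "k \<in> {1..l}" "Suc k \<in> {1..l}" using k by auto
      show ?thesis
      proof (cases "v i = v k")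
        case True then have "i = k" using pv_eq[OF i1(1) k1(1)] by simp
        then show ?thesis using k True pv_eq[OF i1(1) k1(2)] by auto
      next
        case False
        then have "v i = v (Suc k)" "y = v k" using k by auto
        then have "i = Suc k" using pv_eq[OF i1(1) k1(2)] by simp
        then show ?thesis using \<open>y = v k\<close> by simp
      qed
    qed
  next
    assume "y = v (i - 1) \<or> y = v (Suc i)"
    then show "{v i, y} \<in> EG1"
    proof
      assume y: "y = v (i - 1)"
      have "Suc (i - 1) = i" using i by simp
      then have "{v i, y} = {v (Suc (i-1)), v (i - 1)}" using y by simp
      also have "\<dots> \<in> EP" unfolding EP_iff apply (intro exI[of _ "i - 1"]) using i by auto
      finally show ?thesis unfolding EG1_def by simp
    next
      assume y: "y = v (Suc i)"
      have "{v i, y} \<in> EP" unfolding EP_iff using i y by (intro exI[of _ i]) simp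
      then show ?thesis unfolding EG1_def by simp
    qed
  qed
  then have "nbrs EG1 (v i) = {v (i - 1), v (Suc i)}" unfolding nbrs_def by auto
  moreover have "v (i - 1) \<noteq> v (Suc i)" using pv_eq[OF i1(2) i1(3)] by simp
  ultimately show ?thesis unfolding degree_def by simp
qed

lemma deg_a_ge2: "2 \<le> degree EG1 (v 1)"
proof -
  obtain z where z: "z \<in> V1" "z \<noteq> v 1" using card2_other[OF k1] by blast
  obtain y where y: "{v 1, y} \<in> E1" using connected_nbr[OF c1 a1 z(1) z(2)] by blast
  have yV1: "y \<in> V1" using E1_mem y by blast
  have two: "2 \<in> {1..l}" using l2 by simp
  have v2: "v 2 \<notin> V1" using pv_V1[OF two] by simp
  have "{v 1, v (Suc 1)} \<in> EP" unfolding EP_iff using l2 by (intro exI[of _ 1]) simp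
  then have "{v 1, v 2} \<in> EG1" unfolding EG1_def by (simp add: numeral_2_eq_2)
  moreover have "{v 1, y} \<in> EG1" using y unfolding EG1_def by simp
  ultimately have "{y, v 2} \<subseteq> nbrs EG1 (v 1)" unfolding nbrs_def by simp
  then have "card {y, v 2} \<le> card (nbrs EG1 (v 1))" by (rule card_mono[OF fin_nbrs1])
  moreover have "y \<noteq> v 2" using yV1 v2 by auto
  ultimately show ?thesis unfolding degree_def by simp
qed

end



context setup3 begin

lemma ecc2_pos: "x \<in> VG \<Longrightarrow> 0 < ecc VG EG2 x"
proof -
  assume x: "x \<in> VG"
  obtain z where z: "z \<in> VG" "z \<noteq> x"
  proof (cases "x = v 1")
    case True then show ?thesis using that[of "v l"] v_VG l2 v1_ne_vl by auto
  next
    case False then show ?thesis using that[of "v 1"] V1_VG a1 by auto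
  qed
  show ?thesis by (rule ecc_pos[OF finVG x z(1) z(2) conn2[OF x z(1)]])
qed

lemma term_le:
  assumes "x \<in> VG" "degree EG1 y \<le> degree EG2 x" "ecc VG EG2 x \<le> ecc VG EG1 y"
  shows "real (degree EG1 y) / real (ecc VG EG1 y) \<le> real (degree EG2 x) / real (ecc VG EG2 x)"
proof -
  have p: "0 < real (ecc VG EG2 x)" using ecc2_pos[OF assms(1)] by simp
  show ?thesis by (rule frac_le) (use assms p in auto)
qed

definition "sig w = (if w \<in> v ` {1..l} then v (l + 1 - pidx w) else w)"

lemma sig_v: "i \<in> {1..l} \<Longrightarrow> sig (v i) = v (l + 1 - i)"
  unfolding sig_def using pidx_v by simp

lemma sig_other: "w \<notin> v ` {1..l} \<Longrightarrow> sig w = w"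
  unfolding sig_def by simp

lemma sig_bij: "bij_betw sig VG VG"
proof (rule bij_betw_byWitness[where f'=sig])
  show "\<forall>a\<in>VG. sig (sig a) = a"
  proof
    fix a assume "a \<in> VG"
    show "sig (sig a) = a"
    proof (cases "a \<in> v ` {1..l}")
      case True
      then obtain i where i: "i \<in> {1..l}" "a = v i" by blast
      have j: "l + 1 - i \<in> {1..l}" using i by auto
      have "sig (sig a) = v (l + 1 - (l + 1 - i))" using sig_v[OF i(1)] sig_v[OF j] i by simp
      also have "\<dots> = a" using i by simp
      finally show ?thesis .
    next
      case False then show ?thesis using sig_other by simp
    qed
  qed
  then show "\<forall>a\<in>VG. sig (sig a) = a" .
  have sub: "sig ` VG \<subseteq> VG"
  proof
    fix b assume "b \<in> sig ` VG"
    then obtain a where a: "a \<in> VG" "b = sig a" by blast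
    show "b \<in> VG"
    proof (cases "a \<in> v ` {1..l}")
      case True
      then obtain i where i: "i \<in> {1..l}" "a = v i" by blast
      have j: "l + 1 - i \<in> {1..l}" using i by auto
      show ?thesis using a i sig_v[OF i(1)] v_VG[OF j] by simp
    next
      case False then show ?thesis using a sig_other by simp
    qed
  qed
  show "sig ` VG \<subseteq> VG" using sub .
  show "sig ` VG \<subseteq> VG" using sub .
qed

lemma main: "xi_ee VG EG1 < xi_ee VG EG2"
proof -
  define F1 where "F1 x = real (degree EG1 x) / real (ecc VG EG1 x)" for x
  define F2 where "F2 x = real (degree EG2 x) / real (ecc VG EG2 x)" for x
  have xi: "xi_ee VG EG1 = sum F1 VG" "xi_ee VG EG2 = sum F2 VG"
    unfolding xi_ee_def F1_def F2_def by simp_all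
  have aVG: "v 1 \<in> VG" and bVG: "v l \<in> VG" using V1_VG[OF a1] V2_VG[OF bl] .
  have i1: "1 \<in> {1..l}" and il: "l \<in> {1..l}" using l2 by auto
  define D where "D = degree EG1 (v 1)"
  define d where "d = card N"
  have dpos: "1 \<le> d" unfolding d_def using N_ne finN by (simp add: Suc_leI card_gt_0_iff)
  have D2: "2 \<le> D" unfolding D_def using deg_a_ge2 .
  have A2pos: "0 < ecc VG EG2 (v 1)" using ecc2_pos[OF aVG] .
  have AB: "ecc VG EG2 (v 1) < ecc VG EG2 (v l)" using A2_lt_B2 .
  have F2a: "F2 (v 1) = (real D + real d) / real (ecc VG EG2 (v 1))"
    unfolding F2_def D_def d_def deg_a by simp
  have F2b: "F2 (v l) = 1 / real (ecc VG EG2 (v l))" unfolding F2_def deg2_b by simp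
  have F1a: "F1 (v 1) = real D / real (ecc VG EG1 (v 1))" unfolding F1_def D_def by simp
  have F1b: "F1 (v l) = (real d + 1) / real (ecc VG EG1 (v l))" unfolding F1_def d_def deg1_b by simp
  have P2a: "ecc VG EG2 (v 1) \<le> max (max e1 e2) (l - 1)" using P2[OF i1] by simp
  have P2b: "ecc VG EG2 (v l) \<le> l - 1 + max e1 e2" using P2[OF il] by simp
  have P3a: "e1 \<le> ecc VG EG1 (v 1)" "l - 1 + e2 \<le> ecc VG EG1 (v 1)" using P3[OF i1] by auto
  have P3b: "l - 1 + e1 \<le> ecc VG EG1 (v l)" "e2 \<le> ecc VG EG1 (v l)" using P3[OF il] by auto
  have nonpath: "F1 x \<le> F2 x" if x: "x \<in> VG" "x \<notin> v ` {1..l}" for x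
  proof -
    have xx: "x \<in> V1 \<or> (x \<in> V2 \<and> x \<noteq> v l)" using VG_cases[OF x(1)] x(2) by blast
    have "x \<noteq> v 1" "x \<noteq> v l" using x(2) i1 il by auto
    then have "degree EG1 x \<le> degree EG2 x" using deg_other[OF x(1)] by simp
    then show ?thesis unfolding F1_def F2_def using term_le[OF x(1)] P1[OF xx] by simp
  qed
  show ?thesis
  proof (cases "e2 \<le> e1")
    case True
    have le: "F1 (id x) \<le> F2 x" if x: "x \<in> VG - {v 1, v l}" for x
    proof (cases "x \<in> v ` {1..l}")
      case False then show ?thesis using nonpath x by simp
    next
      case True
      then obtain i where i: "i \<in> {1..l}" "x = v i" by blast
      have "x \<noteq> v 1" "x \<noteq> v l" using x by auto
      then have deg: "degree EG1 x \<le> degree EG2 x" using deg_other x by simp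
      have "ecc VG EG2 x \<le> ecc VG EG1 x" using P2[OF i(1)] P3[OF i(1)] i \<open>e2 \<le> e1\<close> by auto
      then show ?thesis unfolding F1_def F2_def using term_le deg x by simp
    qed
    have lt: "F1 (id (v 1)) + F1 (id (v l)) < F2 (v 1) + F2 (v l)"
    proof -
      have "ecc VG EG2 (v 1) \<le> ecc VG EG1 (v 1)" using P2a P3a True by auto
      moreover have "ecc VG EG2 (v l) \<le> ecc VG EG1 (v l)" using P2b P3b True by auto
      ultimately have "real D / real (ecc VG EG1 (v 1)) + (real d + 1) / real (ecc VG EG1 (v l))
          < (real D + real d) / real (ecc VG EG2 (v 1)) + 1 / real (ecc VG EG2 (v l))"
        using A2pos AB dpos by (intro ab_ineq) auto
      then show ?thesis using F1a F1b F2a F2b by simp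
    qed
    have "sum F1 VG < sum F2 VG"
      by (rule final_sum[OF finVG aVG bVG v1_ne_vl bij_betw_id le lt])
    then show ?thesis using xi by simp
  next
    case False
    have le: "F1 (sig x) \<le> F2 x" if x: "x \<in> VG - {v 1, v l}" for x
    proof (cases "x \<in> v ` {1..l}")
      case False then show ?thesis using nonpath x sig_other by simp
    next
      case True
      then obtain i where i: "i \<in> {1..l}" "x = v i" by blast
      have "x \<noteq> v 1" "x \<noteq> v l" using x by auto
      then have "i \<noteq> 1" "i \<noteq> l" using i(2) by auto
      then have ii: "i \<in> {2..<l}" using i(1) by auto
      have jj: "l + 1 - i \<in> {2..<l}" using ii by auto
      have j: "l + 1 - i \<in> {1..l}" using ii by auto
      have sx: "sig x = v (l + 1 - i)" using sig_v i by simp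
      have deg: "degree EG1 (sig x) \<le> degree EG2 x"
        using deg_other x \<open>x \<noteq> v 1\<close> \<open>x \<noteq> v l\<close> deg_int[OF ii] deg_int[OF jj] sx i by simp
      have e: "ecc VG EG2 x \<le> ecc VG EG1 (sig x)"
      proof -
        have "ecc VG EG2 (v i) \<le> max (i - 1 + max e1 e2) (l - i)" using P2[OF i(1)] .
        moreover have "(l + 1 - i) - 1 + e1 \<le> ecc VG EG1 (v (l + 1 - i))"
          "l - (l + 1 - i) + e2 \<le> ecc VG EG1 (v (l + 1 - i))" using P3[OF j] by auto
        ultimately show ?thesis using sx i False ii by auto
      qed
      show ?thesis unfolding F1_def F2_def using term_le[OF _ deg e] x by simp
    qed
    have lt: "F1 (sig (v 1)) + F1 (sig (v l)) < F2 (v 1) + F2 (v l)"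
    proof -
      have s: "sig (v 1) = v l" "sig (v l) = v 1" using sig_v[OF i1] sig_v[OF il] l2 by auto
      have "ecc VG EG2 (v 1) \<le> ecc VG EG1 (v l)" using P2a P3b False by auto
      moreover have "ecc VG EG2 (v l) \<le> ecc VG EG1 (v 1)" using P2b P3a False by auto
      ultimately have "(real d + 1) / real (ecc VG EG1 (v l)) + real D / real (ecc VG EG1 (v 1))
          < (real D + real d) / real (ecc VG EG2 (v 1)) + 1 / real (ecc VG EG2 (v l))"
        using A2pos AB D2 by (intro ab_ineq2) auto
      then show ?thesis using F1a F1b F2a F2b s by simp
    qed
    have "sum F1 VG < sum F2 VG"
      by (rule final_sum[OF finVG aVG bVG v1_ne_vl sig_bij le lt])
    then show ?thesis using xi by simp
  qed
qed

end

theorem theorem3p3: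
  fixes V1 V2 :: "'a set" and E1 E2 :: "'a set set" and v :: "nat \<Rightarrow> 'a" and l :: nat
  assumes "simple_graph V1 E1" "connected_graph V1 E1" "card V1 \<ge> 2"
    and "simple_graph V2 E2" "connected_graph V2 E2" "card V2 \<ge> 2"
    and "V1 \<inter> V2 = {}"
    and "l \<ge> 2"
    and "v 1 \<in> V1" "v l \<in> V2"
    and "inj_on v {1..l}"
    and "\<forall>i\<in>{2..<l}. v i \<notin> V1 \<union> V2"
  shows "let VG = V1 \<union> V2 \<union> v ` {1..l};
             E_G1 = E1 \<union> E2 \<union> {{v i, v (Suc i)} | i. 1 \<le> i \<and> i < l};
             N = nbrs E2 (v l);
             E_G2 = (E_G1 - {{v l, x} | x. x \<in> N}) \<union> {{v 1, x} | x. x \<in> N}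
         in xi_ee VG E_G1 < xi_ee VG E_G2"
proof -
  interpret S: setup3 V1 V2 E1 E2 v l using assms by (unfold_locales) auto
  show ?thesis using S.main
    unfolding Let_def S.VG_def S.EG1_def S.EG2_def S.EP_def S.R_def S.A_def S.N_def .
qed



end
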